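(* Let $m\in\mathbb N$ and let $f:\mathbb R\to\mathbb R$ be a $2\pi$-periodic function of class $C^m$ with zero mean, $\int_0^{2\pi} f(t)\,dt=0$. Then: (a) $\displaystyle 0\le \sum_{k=0}^{m}\mathbf c_{m,k}\int_0^{2\pi} \big(f^{(k)}(t)\big)^2\,dt$, where $\mathbf c_{m,k}$ are the coefficients of the polynomial $Q_m(t):=\prod_{j=1}^{m}(t-j^2)=\sum_{k=0}^{m}\mathbf c_{m,k}t^k$. (b) $\displaystyle 0\le \sum_{k=0}^{m-1}\lambda_{m,k}\int_0^{2\pi}\Big[\big(f^{(k+1)}(t)\big)^2-\big(f^{(k)}(t)\big)^2\Big]dt$, where $\lambda_{m,k}$ are the coefficients of the polynomial $P_m(t)=\sum_{k=0}^{m-1}\lambda_{m,k}t^k$ defined by $P_1(t)=1$ and $P_m(t):=\prod_{j=2}^{m}(t-j^2)$ for $m\ge 2$. (c) If $m\ge 2$, $$0\le \prod_{j=2}^{m}(1-j^2)\int_0^{2\pi}\big[\dot f(t)^2-f(t)^2\big]dt+\sum_{k=1}^{m-1}S_{m,k}\int_0^{2\pi}\big(f^{(k+1)}(t)+f^{(k-1)}(t)\big)^2dt,$$ where $S_{m,1},\dots,S_{m,m-1}$ are the coefficients of the polynomial $\mathcal S_m(t):=\frac{P_m(t)-P_m(1)}{t-1}=\sum_{k=1}^{m-1}S_{m,k}t^{k-1}$. The inequalities in (a), (b), (c) are equivalent, and equality holds in them if and only if $f(t)=\sum_{n=1}^{m}\big(\alpha_n\cos(nt)+\beta_n\sin(nt)\big)$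 for some real constants $\alpha_n,\beta_n$.
   Context: $f^{(k)}$ denotes the $k$-th derivative of $f$; $\dot f=f'$. *)

theory Defs
  imports "HOL-Analysis.Analysis" "HOL-Computational_Algebra.Polynomial"
begin

definition C_m :: "nat \<Rightarrow> (real \<Rightarrow> real) \<Rightarrow> bool" where
  "C_m m f \<longleftrightarrow>
     (\<forall>k<m. \<forall>x. ((deriv ^^ k) f has_real_derivative (deriv ^^ Suc k) f x) (at x)) \<and>
     (\<forall>k\<le>m. continuous_on UNIV ((deriv ^^ k) f))"

definition Q_poly :: "nat \<Rightarrow> real poly" where
  "Q_poly m = (\<Prod>j\<in>{1..m}. [: - ((real j)^2), 1 :])"

definition P_poly :: "nat \<Rightarrow> real poly" where
  "P_poly m = (if m = 1 then 1 else (\<Prod>j\<in>{2..m}. [: - ((real j)^2), 1 :]))"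

definition S_poly :: "nat \<Rightarrow> real poly" where
  "S_poly m = (P_poly m - [:poly (P_poly m) 1:]) div [: -1, 1 :]"

end

theory Submission
  imports Defs
begin


lemma int_cos_int:
  "integral {0..2*pi} (\<lambda>t. cos (real_of_int z * t)) = (if z = 0 then 2*pi else 0)"
proof (cases "z = 0")
  case True then show ?thesis by simp
next
  case False
  have "((\<lambda>t. cos (real_of_int z * t)) has_integral (sin (real_of_int z * (2*pi)) / z - sin (real_of_int z * 0) / z)) {0..2*pi}"
  proof (rule fundamental_theorem_of_calculus)
    show "((\<lambda>t. sin (real_of_int z * t) / z) has_vector_derivative cos (real_of_int z * x)) (at x within {0..2*pi})" for x
      using False unfolding has_vector_derivative_def
      by (intro derivative_eq_intros | force)+
  qed auto
  moreover have "sin (real_of_int z * (2*pi)) = 0"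
    by (metis mult.commute sin_int_2pin)
  ultimately show ?thesis using False by (simp add: integral_unique)
qed

lemma int_sin_int:
  "integral {0..2*pi} (\<lambda>t. sin (real_of_int z * t)) = 0"
proof (cases "z = 0")
  case True then show ?thesis by simp
next
  case False
  have "((\<lambda>t. sin (real_of_int z * t)) has_integral (- cos (real_of_int z * (2*pi)) / z - - cos (real_of_int z * 0) / z)) {0..2*pi}"
  proof (rule fundamental_theorem_of_calculus)
    show "((\<lambda>t. - cos (real_of_int z * t) / z) has_vector_derivative sin (real_of_int z * x)) (at x within {0..2*pi})" for x
      using False unfolding has_vector_derivative_def
      by (intro derivative_eq_intros | force)+
  qed auto
  moreover have "cos (real_of_int z * (2*pi)) = 1"
    by (metis mult.commute cos_int_2pin)
  ultimately show ?thesis using False by (simp add: integral_unique)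
qed

lemma cint: "continuous_on UNIV (g::real\<Rightarrow>real) \<Longrightarrow> g integrable_on {a..b}"
  by (rule integrable_continuous_interval, rule continuous_on_subset, assumption, simp)

lemma ortho_cc:
  "integral {0..2*pi} (\<lambda>t. cos (real n * t) * cos (real k * t)) =
     pi * ((if n = k then 1 else 0) + (if n + k = 0 then 1 else 0))"
proof -
  have e: "cos (real n * t) * cos (real k * t) =
     cos (real_of_int (int n - int k) * t) / 2 + cos (real_of_int (int n + int k) * t) / 2" for t
    by (simp add: cos_times_cos left_diff_distrib distrib_right add_divide_distrib)
  have "integral {0..2*pi} (\<lambda>t. cos (real n * t) * cos (real k * t)) =
     integral {0..2*pi} (\<lambda>t. cos (real_of_int (int n - int k) * t)) / 2 +
     integral {0..2*pi} (\<lambda>t. cos (real_of_int (int n + int k) * t)) / 2"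
    unfolding e
    by (subst integral_add) (auto intro!: cint continuous_intros)
  then show ?thesis by (simp only: int_cos_int) simp
qed

lemma ortho_ss:
  "integral {0..2*pi} (\<lambda>t. sin (real n * t) * sin (real k * t)) =
     pi * ((if n = k then 1 else 0) - (if n + k = 0 then 1 else 0))"
proof -
  have e: "sin (real n * t) * sin (real k * t) =
     cos (real_of_int (int n - int k) * t) / 2 - cos (real_of_int (int n + int k) * t) / 2" for t
    by (simp add: sin_times_sin left_diff_distrib distrib_right diff_divide_distrib)
  have "integral {0..2*pi} (\<lambda>t. sin (real n * t) * sin (real k * t)) =
     integral {0..2*pi} (\<lambda>t. cos (real_of_int (int n - int k) * t)) / 2 -
     integral {0..2*pi} (\<lambda>t. cos (real_of_int (int n + int k) * t)) / 2"
    unfolding e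
    by (subst integral_diff) (auto intro!: cint continuous_intros)
  then show ?thesis by (simp only: int_cos_int) simp
qed

lemma ortho_sc:
  "integral {0..2*pi} (\<lambda>t. sin (real n * t) * cos (real k * t)) = 0"
proof -
  have e: "sin (real n * t) * cos (real k * t) =
     sin (real_of_int (int n + int k) * t) / 2 + sin (real_of_int (int n - int k) * t) / 2" for t
    by (simp add: sin_times_cos left_diff_distrib distrib_right add_divide_distrib)
  have "integral {0..2*pi} (\<lambda>t. sin (real n * t) * cos (real k * t)) =
     integral {0..2*pi} (\<lambda>t. sin (real_of_int (int n + int k) * t)) / 2 +
     integral {0..2*pi} (\<lambda>t. sin (real_of_int (int n - int k) * t)) / 2"
    unfolding e
    by (subst integral_add) (auto intro!: cint continuous_intros)
  then show ?thesis by (simp only: int_sin_int)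
qed


definition trigp :: "(real \<Rightarrow> real) \<Rightarrow> bool" where
  "trigp P \<longleftrightarrow> (\<exists>N a b. \<forall>t. P t = (\<Sum>n\<le>N. a n * cos (real n * t) + b n * sin (real n * t)))"

lemma sum_pad: "N1 \<le> (N::nat) \<Longrightarrow> (\<Sum>n\<le>N. if n \<le> N1 then F n else 0) = (\<Sum>n\<le>N1. F n)"
proof -
  assume "N1 \<le> N"
  then have "{n\<in>{..N}. n \<le> N1} = {..N1}" by auto
  then show ?thesis by (metis (no_types) finite_atMost sum.inter_filter)
qed

lemma trigp_add:
  assumes "trigp P" "trigp Q" shows "trigp (\<lambda>t. P t + Q t)"
proof -
  obtain N1 a1 b1 where 1: "\<And>t. P t = (\<Sum>n\<le>N1. a1 n * cos (real n * t) + b1 n * sin (real n * t))"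
    using assms(1) unfolding trigp_def by blast
  obtain N2 a2 b2 where 2: "\<And>t. Q t = (\<Sum>n\<le>N2. a2 n * cos (real n * t) + b2 n * sin (real n * t))"
    using assms(2) unfolding trigp_def by blast
  define N where "N = max N1 N2"
  define a where "a n = (if n \<le> N1 then a1 n else 0) + (if n \<le> N2 then a2 n else 0)" for n
  define b where "b n = (if n \<le> N1 then b1 n else 0) + (if n \<le> N2 then b2 n else 0)" for n
  have "P t + Q t = (\<Sum>n\<le>N. a n * cos (real n * t) + b n * sin (real n * t))" for t
  proof -
    have "(\<Sum>n\<le>N. a n * cos (real n * t) + b n * sin (real n * t)) =
       (\<Sum>n\<le>N. (if n \<le> N1 then a1 n * cos (real n * t) + b1 n * sin (real n * t) else 0) +
       (if n \<le> N2 then a2 n * cos (real n * t) + b2 n * sin (real n * t) else 0))"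
      by (rule sum.cong) (auto simp: a_def b_def algebra_simps)
    also have "\<dots> = (\<Sum>n\<le>N. if n \<le> N1 then a1 n * cos (real n * t) + b1 n * sin (real n * t) else 0) +
       (\<Sum>n\<le>N. if n \<le> N2 then a2 n * cos (real n * t) + b2 n * sin (real n * t) else 0)"
      by (rule sum.distrib)
    also have "\<dots> = P t + Q t"
      by (simp add: sum_pad N_def 1 2)
    finally show ?thesis by simp
  qed
  then show ?thesis unfolding trigp_def by blast
qed

lemma trigp_const: "trigp (\<lambda>t. c)"
  unfolding trigp_def
  by (rule exI[of _ 0], rule exI[of _ "\<lambda>_. c"], rule exI[of _ "\<lambda>_. 0"]) simp

lemma trigp_cos: "trigp (\<lambda>t. cos (real k * t))"
  unfolding trigp_def
proof (rule exI[of _ k], rule exI[of _ "\<lambda>n. if n = k then 1 else 0"], rule exI[of _ "\<lambda>_. 0"], rule allI)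
  fix t
  have "(\<Sum>n\<le>k. (if n = k then 1 else 0) * cos (real n * t) + 0 * sin (real n * t)) =
        (\<Sum>n\<le>k. if n = k then cos (real n * t) else 0)"
    by (rule sum.cong) auto
  then show "cos (real k * t) = (\<Sum>n\<le>k. (if n = k then 1 else 0) * cos (real n * t) + 0 * sin (real n * t))"
    by simp
qed

lemma trigp_sin: "trigp (\<lambda>t. sin (real k * t))"
  unfolding trigp_def
proof (rule exI[of _ k], rule exI[of _ "\<lambda>_. 0"], rule exI[of _ "\<lambda>n. if n = k then 1 else 0"], rule allI)
  fix t
  have "(\<Sum>n\<le>k. 0 * cos (real n * t) + (if n = k then 1 else 0) * sin (real n * t)) =
        (\<Sum>n\<le>k. if n = k then sin (real n * t) else 0)"
    by (rule sum.cong) auto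
  then show "sin (real k * t) = (\<Sum>n\<le>k. 0 * cos (real n * t) + (if n = k then 1 else 0) * sin (real n * t))"
    by simp
qed

lemma trigp_scale: "trigp P \<Longrightarrow> trigp (\<lambda>t. c * P t)"
  unfolding trigp_def
proof (elim exE)
  fix N a b assume h: "\<forall>t. P t = (\<Sum>n\<le>N. a n * cos (real n * t) + b n * sin (real n * t))"
  show "\<exists>N a b. \<forall>t. c * P t = (\<Sum>n\<le>N. a n * cos (real n * t) + b n * sin (real n * t))"
    by (rule exI[of _ N], rule exI[of _ "\<lambda>n. c * a n"], rule exI[of _ "\<lambda>n. c * b n"])
       (simp add: h sum_distrib_left algebra_simps)
qed

lemma trigp_cong: "trigp P \<Longrightarrow> (\<And>t. P t = Q t) \<Longrightarrow> trigp Q"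
proof -
  assume "trigp P" "\<And>t. P t = Q t"
  then have "P = Q" by auto
  with \<open>trigp P\<close> show ?thesis by simp
qed

lemma trigp_sum: "finite I \<Longrightarrow> (\<And>i. i \<in> I \<Longrightarrow> trigp (F i)) \<Longrightarrow> trigp (\<lambda>t. \<Sum>i\<in>I. F i t)"
  by (induct I rule: finite_induct) (auto intro: trigp_add trigp_const)

lemma trigp_cos_int: "trigp (\<lambda>t. cos (real_of_int z * t))"
proof (cases "z \<ge> 0")
  case True
  then have e: "real_of_int z = real (nat z)" by simp
  show ?thesis by (rule trigp_cong[OF trigp_cos[of "nat z"]]) (subst e, rule refl)
next
  case False
  then have e: "real_of_int z = - real (nat (-z))" by simp
  have "cos (real (nat (-z)) * t) = cos (real_of_int z * t)" for t
    by (subst e) simp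
  then show ?thesis by (rule trigp_cong[OF trigp_cos[of "nat (-z)"]])
qed

lemma trigp_sin_int: "trigp (\<lambda>t. sin (real_of_int z * t))"
proof (cases "z \<ge> 0")
  case True
  then have e: "real_of_int z = real (nat z)" by simp
  show ?thesis by (rule trigp_cong[OF trigp_sin[of "nat z"]]) (subst e, rule refl)
next
  case False
  then have e: "real_of_int z = - real (nat (-z))" by simp
  have "-1 * sin (real (nat (-z)) * t) = sin (real_of_int z * t)" for t
    by (subst e) simp
  then show ?thesis by (rule trigp_cong[OF trigp_scale[OF trigp_sin[of "nat (-z)"]]])
qed

lemma trigp_cc: "trigp (\<lambda>t. cos (real n * t) * cos (real k * t))"
proof -
  have "trigp (\<lambda>t. (1/2) * cos (real_of_int (int n - int k) * t) + (1/2) * cos (real_of_int (int n + int k) * t))"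
    by (intro trigp_add trigp_scale trigp_cos_int)
  then show ?thesis
    by (rule trigp_cong) (simp add: cos_times_cos left_diff_distrib distrib_right add_divide_distrib)
qed

lemma trigp_ss: "trigp (\<lambda>t. sin (real n * t) * sin (real k * t))"
proof -
  have "trigp (\<lambda>t. (1/2) * cos (real_of_int (int n - int k) * t) + (-1/2) * cos (real_of_int (int n + int k) * t))"
    by (intro trigp_add trigp_scale trigp_cos_int)
  then show ?thesis
    by (rule trigp_cong) (simp add: sin_times_sin left_diff_distrib distrib_right diff_divide_distrib)
qed

lemma trigp_sc: "trigp (\<lambda>t. sin (real n * t) * cos (real k * t))"
proof -
  have "trigp (\<lambda>t. (1/2) * sin (real_of_int (int n + int k) * t) + (1/2) * sin (real_of_int (int n - int k) * t))"
    by (intro trigp_add trigp_scale trigp_sin_int)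
  then show ?thesis
    by (rule trigp_cong) (simp add: sin_times_cos left_diff_distrib distrib_right add_divide_distrib)
qed


lemma trigp_mult:
  assumes "trigp P" "trigp Q" shows "trigp (\<lambda>t. P t * Q t)"
proof -
  obtain N1 a1 b1 where 1: "\<And>t. P t = (\<Sum>n\<le>N1. a1 n * cos (real n * t) + b1 n * sin (real n * t))"
    using assms(1) unfolding trigp_def by blast
  obtain N2 a2 b2 where 2: "\<And>t. Q t = (\<Sum>n\<le>N2. a2 n * cos (real n * t) + b2 n * sin (real n * t))"
    using assms(2) unfolding trigp_def by blast
  have "trigp (\<lambda>t. \<Sum>n\<le>N1. \<Sum>k\<le>N2.
      (a1 n * a2 k) * (cos (real n * t) * cos (real k * t)) +
      (a1 n * b2 k) * (sin (real k * t) * cos (real n * t)) +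
      (b1 n * a2 k) * (sin (real n * t) * cos (real k * t)) +
      (b1 n * b2 k) * (sin (real n * t) * sin (real k * t)))"
    by (intro trigp_sum trigp_add trigp_scale trigp_cc trigp_ss trigp_sc finite_atMost)
  then show ?thesis
  proof (rule trigp_cong)
    fix t
    have "P t * Q t = (\<Sum>n\<le>N1. \<Sum>k\<le>N2. (a1 n * cos (real n * t) + b1 n * sin (real n * t)) *
        (a2 k * cos (real k * t) + b2 k * sin (real k * t)))"
      by (simp only: 1 2 sum_product)
    also have "\<dots> = (\<Sum>n\<le>N1. \<Sum>k\<le>N2.
      (a1 n * a2 k) * (cos (real n * t) * cos (real k * t)) +
      (a1 n * b2 k) * (sin (real k * t) * cos (real n * t)) +
      (b1 n * a2 k) * (sin (real n * t) * cos (real k * t)) +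
      (b1 n * b2 k) * (sin (real n * t) * sin (real k * t)))"
      by (intro sum.cong refl) (simp add: algebra_simps)
    finally show "(\<Sum>n\<le>N1. \<Sum>k\<le>N2.
      (a1 n * a2 k) * (cos (real n * t) * cos (real k * t)) +
      (a1 n * b2 k) * (sin (real k * t) * cos (real n * t)) +
      (b1 n * a2 k) * (sin (real n * t) * cos (real k * t)) +
      (b1 n * b2 k) * (sin (real n * t) * sin (real k * t))) = P t * Q t" by simp
  qed
qed

lemma trigp_cis_linear:
  assumes "bounded_linear (l :: complex \<Rightarrow> real)"
  shows "trigp (\<lambda>t. l (cis t))"
proof -
  interpret bounded_linear l by fact
  have e: "cis t = cos t *\<^sub>R 1 + sin t *\<^sub>R \<i>" for t
    by (simp add: complex_eq_iff)
  have "trigp (\<lambda>t. l 1 * cos (real 1 * t) + l \<i> * sin (real 1 * t))"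
    by (intro trigp_add trigp_scale trigp_cos trigp_sin)
  then show ?thesis
    by (rule trigp_cong) (simp add: e add scale)
qed

lemma trigp_poly_cis:
  assumes "real_polynomial_function (p :: complex \<Rightarrow> real)"
  shows "trigp (\<lambda>t. p (cis t))"
  using assms
proof (induction p rule: real_polynomial_function.induct)
  case (linear f) then show ?case by (rule trigp_cis_linear)
next
  case (const c) then show ?case by (rule trigp_const)
next
  case (add f g) from add.IH show ?case by (rule trigp_add)
next
  case (mult f g) from mult.IH show ?case by (rule trigp_mult)
qed




lemma periodic_nat:
  assumes per: "\<forall>t. g (t + 2*pi) = (g t :: real)"
  shows "g (t + 2*pi*real n) = g t"
proof (induction n)
  case 0 then show ?case by simp
next
  case (Suc n)
  have "g (t + 2*pi*real (Suc n)) = g ((t + 2*pi*real n) + 2*pi)"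
    by (simp add: algebra_simps)
  also have "\<dots> = g (t + 2*pi*real n)" by (rule spec[OF per])
  finally show ?case using Suc by simp
qed

lemma periodic_int:
  assumes per: "\<forall>t. g (t + 2*pi) = (g t :: real)"
  shows "g (t + 2*pi*real_of_int k) = g t"
proof (cases "k \<ge> 0")
  case True
  then have e: "real_of_int k = real (nat k)" by simp
  show ?thesis using periodic_nat[OF per, of t "nat k"] by (simp only: e)
next
  case False
  then have e: "real_of_int k = - real (nat (-k))" by simp
  have "g ((t + 2*pi*real_of_int k) + 2*pi*real (nat (-k))) = g (t + 2*pi*real_of_int k)"
    by (rule periodic_nat[OF per])
  moreover have "(t + 2*pi*real_of_int k) + 2*pi*real (nat (-k)) = t"
    by (subst e) simp
  ultimately show ?thesis by simp
qed

lemma periodic_reduce: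
  assumes per: "\<forall>t. g (t + 2*pi) = (g t :: real)"
  shows "\<exists>s\<in>{0..2*pi}. g t = g s"
proof -
  define k where "k = \<lfloor>t / (2*pi)\<rfloor>"
  define s where "s = t - 2*pi*real_of_int k"
  have "real_of_int k \<le> t / (2*pi)" "t / (2*pi) < real_of_int k + 1"
    unfolding k_def by linarith+
  then have "2*pi*real_of_int k \<le> t" "t < 2*pi*real_of_int k + 2*pi"
    using pi_gt_zero by (simp_all add: field_simps)
  then have "s \<in> {0..2*pi}" unfolding s_def by auto
  moreover have "g t = g s"
    using periodic_int[OF per, of s k] by (simp add: s_def)
  ultimately show ?thesis by blast
qed

lemma cis_congr:
  assumes per: "\<forall>t. g (t + 2*pi) = (g t :: real)" and "cis a = cis b"
  shows "g a = g b"
proof -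
  have "cos a = cos b" using arg_cong[OF assms(2), of Re] by simp
  moreover have "sin a = sin b" using arg_cong[OF assms(2), of Im] by simp
  ultimately have "\<exists>n::int. a = b + 2*pi*real_of_int n"
    using sin_cos_eq_iff[of a b] by blast
  then obtain n :: int where "a = b + 2*pi*real_of_int n" by blast
  then show ?thesis using periodic_int[OF per, of b n] by simp
qed

lemma cis_Arg1: assumes "norm z = 1" shows "cis (Arg z) = z"
proof -
  have "z \<noteq> 0" using assms by auto
  then show ?thesis by (simp add: cis_Arg sgn_div_norm assms)
qed

lemma trig_density:
  assumes cont: "continuous_on UNIV g" and per: "\<forall>t. g (t + 2*pi) = (g t :: real)" and e: "e > 0"
  shows "\<exists>P. trigp P \<and> (\<forall>t. \<bar>g t - P t\<bar> < e)"
proof -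
  define G where "G z = g (Arg z)" for z
  have gc: "isCont g x" for x
    using cont continuous_on_eq_continuous_at open_UNIV by blast
  have GS: "continuous_on (sphere 0 1) G"
    unfolding continuous_on_eq_continuous_within
  proof
    fix z0 :: complex assume z0: "z0 \<in> sphere 0 1"
    define t0 where "t0 = Arg z0"
    define H where "H z = g (t0 + Arg (z * cis (- t0)))" for z
    have "z0 = cis t0" using z0 cis_Arg1 unfolding t0_def by simp
    then have one: "z0 * cis (- t0) = 1" by (simp add: cis_mult)
    have "isCont Arg (z0 * cis (- t0))"
    proof -
      have "(1::complex) \<notin> \<real>\<^sub>\<le>\<^sub>0" by (simp add: nonpos_Reals_def)
      then show ?thesis unfolding one by (rule continuous_at_Arg)
    qed
    moreover have "isCont (\<lambda>z. z * cis (- t0)) z0" by (intro continuous_intros)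
    ultimately have "isCont (\<lambda>z. Arg (z * cis (- t0))) z0"
      using isCont_o2 by blast
    then have "isCont (\<lambda>z. t0 + Arg (z * cis (- t0))) z0"
      by (intro continuous_intros)
    then have "isCont H z0"
      unfolding H_def by (rule isCont_o2[where g = g]) (rule gc)
    then have c: "continuous (at z0 within sphere 0 1) H"
      by (rule continuous_at_imp_continuous_within)
    have eq: "H z = G z" if "z \<in> sphere 0 1" for z
    proof -
      have nz: "norm z = 1" using that by simp
      have "norm (z * cis (- t0)) = 1" using nz by (simp add: norm_mult)
      then have "cis (t0 + Arg (z * cis (- t0))) = cis t0 * (z * cis (- t0))"
        by (simp add: cis_mult[symmetric] cis_Arg1)
      also have "\<dots> = z" by (simp add: cis_mult mult.left_commute)
      also have "\<dots> = cis (Arg z)" using nz cis_Arg1 by simp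
      finally show ?thesis unfolding H_def G_def by (rule cis_congr[OF per])
    qed
    show "continuous (at z0 within sphere 0 1) G"
      by (rule continuous_transform_within[OF c zero_less_one z0]) (simp add: eq)
  qed
  obtain p where p: "real_polynomial_function p" "\<And>x. x \<in> sphere 0 1 \<Longrightarrow> \<bar>G x - p x\<bar> < e"
    using Stone_Weierstrass_real_polynomial_function[OF compact_sphere GS e] by blast
  have "\<bar>g t - p (cis t)\<bar> < e" for t
  proof -
    have "G (cis t) = g t" unfolding G_def
      by (rule cis_congr[OF per]) (simp add: cis_Arg1)
    then show ?thesis using p(2)[of "cis t"] by simp
  qed
  then show ?thesis
    by (intro exI[of _ "\<lambda>t. p (cis t)"] conjI trigp_poly_cis[OF p(1)]) auto
qed




definition ca :: "(real \<Rightarrow> real) \<Rightarrow> nat \<Rightarrow> real" where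
  "ca g n = integral {0..2*pi} (\<lambda>t. g t * cos (real n * t))"
definition sb :: "(real \<Rightarrow> real) \<Rightarrow> nat \<Rightarrow> real" where
  "sb g n = integral {0..2*pi} (\<lambda>t. g t * sin (real n * t))"
definition tsum :: "nat \<Rightarrow> (nat \<Rightarrow> real) \<Rightarrow> (nat \<Rightarrow> real) \<Rightarrow> real \<Rightarrow> real" where
  "tsum N a b t = (\<Sum>n\<le>N. a n * cos (real n * t) + b n * sin (real n * t))"

lemma int_cmul: "integral S (\<lambda>x. c * f x) = c * integral S (f::'a::euclidean_space\<Rightarrow>real)"
  using integral_cmul[where c=c and f=f and S=S] by simp

lemma tsum_cont: "continuous_on UNIV (tsum N a b)"
  unfolding tsum_def by (intro continuous_intros)

lemma lin_coeff:
  assumes h: "continuous_on UNIV h"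
  shows "integral {0..2*pi} (\<lambda>t. h t * tsum N a b t) = (\<Sum>n\<le>N. a n * ca h n + b n * sb h n)"
proof -
  have e: "h t * tsum N a b t = (\<Sum>n\<le>N. a n * (h t * cos (real n * t)) + b n * (h t * sin (real n * t)))" for t
    unfolding tsum_def sum_distrib_left by (rule sum.cong) (auto simp: algebra_simps)
  have hc: "continuous_on UNIV (\<lambda>t. h t * cos (real n * t))" "continuous_on UNIV (\<lambda>t. h t * sin (real n * t))" for n
    using h by (auto intro!: continuous_intros)
  have "integral {0..2*pi} (\<lambda>t. h t * tsum N a b t) =
        (\<Sum>n\<le>N. integral {0..2*pi} (\<lambda>t. a n * (h t * cos (real n * t)) + b n * (h t * sin (real n * t))))"
    unfolding e by (rule integral_sum) (auto intro!: cint continuous_intros h)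
  also have "\<dots> = (\<Sum>n\<le>N. a n * ca h n + b n * sb h n)"
  proof (rule sum.cong[OF refl])
    fix n
    show "integral {0..2*pi} (\<lambda>t. a n * (h t * cos (real n * t)) + b n * (h t * sin (real n * t))) = a n * ca h n + b n * sb h n"
      by (subst integral_add) (auto intro!: cint continuous_intros h simp: int_cmul ca_def sb_def)
  qed
  finally show ?thesis .
qed

lemma ca_basis: "ca (\<lambda>t. cos (real n * t)) j = pi * ((if n = j then 1 else 0) + (if n + j = 0 then 1 else 0))"
  unfolding ca_def by (rule ortho_cc)
lemma sb_cos_basis: "sb (\<lambda>t. cos (real n * t)) j = 0"
  unfolding sb_def using ortho_sc[of j n] by (simp add: mult.commute)
lemma ca_sin_basis: "ca (\<lambda>t. sin (real n * t)) j = 0"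
  unfolding ca_def by (rule ortho_sc)
lemma sb_basis: "sb (\<lambda>t. sin (real n * t)) j = pi * ((if n = j then 1 else 0) - (if n + j = 0 then 1 else 0))"
  unfolding sb_def by (rule ortho_ss)

lemma ca_tsum: "ca (tsum N a b) n = pi * ((if n \<le> N then a n else 0) + (if n = 0 then a 0 else 0))"
proof -
  have "ca (tsum N a b) n = integral {0..2*pi} (\<lambda>t. cos (real n * t) * tsum N a b t)"
    unfolding ca_def by (simp add: mult.commute)
  also have "\<dots> = (\<Sum>j\<le>N. a j * ca (\<lambda>t. cos (real n * t)) j + b j * sb (\<lambda>t. cos (real n * t)) j)"
    by (rule lin_coeff) (intro continuous_intros)
  also have "\<dots> = (\<Sum>j\<le>N. (if j = n then pi * a n else 0) + (if j = 0 then (if n = 0 then pi * a 0 else 0) else 0))"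
    by (rule sum.cong) (auto simp: ca_basis sb_cos_basis)
  also have "\<dots> = pi * ((if n \<le> N then a n else 0) + (if n = 0 then a 0 else 0))"
    by (simp add: sum.distrib sum.delta)
  finally show ?thesis .
qed

lemma sb_tsum: "sb (tsum N a b) n = pi * ((if n \<le> N then b n else 0) - (if n = 0 then b 0 else 0))"
proof -
  have "sb (tsum N a b) n = integral {0..2*pi} (\<lambda>t. sin (real n * t) * tsum N a b t)"
    unfolding sb_def by (simp add: mult.commute)
  also have "\<dots> = (\<Sum>j\<le>N. a j * ca (\<lambda>t. sin (real n * t)) j + b j * sb (\<lambda>t. sin (real n * t)) j)"
    by (rule lin_coeff) (intro continuous_intros)
  also have "\<dots> = (\<Sum>j\<le>N. (if j = n then pi * b n else 0) - (if j = 0 then (if n = 0 then pi * b 0 else 0) else 0))"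
    by (rule sum.cong) (auto simp: sb_basis ca_sin_basis)
  also have "\<dots> = pi * ((if n \<le> N then b n else 0) - (if n = 0 then b 0 else 0))"
    by (simp add: sum_subtractf sum.delta right_diff_distrib)
  finally show ?thesis .
qed

lemma sq_expand:
  assumes g: "continuous_on UNIV g"
  shows "integral {0..2*pi} (\<lambda>t. (g t - tsum N a b t)^2) =
    integral {0..2*pi} (\<lambda>t. (g t)^2) - 2 * (\<Sum>n\<le>N. a n * ca g n + b n * sb g n)
    + pi * ((\<Sum>n\<le>N. (a n)^2 + (b n)^2) + (a 0)^2 - (b 0)^2)"
proof -
  have T: "continuous_on UNIV (tsum N a b)" by (rule tsum_cont)
  have e: "(g t - tsum N a b t)^2 = ((g t)^2 - 2 * (g t * tsum N a b t)) + tsum N a b t * tsum N a b t" for t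
    by (simp add: power2_eq_square algebra_simps)
  have "integral {0..2*pi} (\<lambda>t. (g t - tsum N a b t)^2) =
      (integral {0..2*pi} (\<lambda>t. (g t)^2) - 2 * integral {0..2*pi} (\<lambda>t. g t * tsum N a b t))
      + integral {0..2*pi} (\<lambda>t. tsum N a b t * tsum N a b t)"
    unfolding e
    by (subst integral_add integral_diff, auto intro!: cint continuous_intros g T simp: int_cmul)+
  also have "integral {0..2*pi} (\<lambda>t. g t * tsum N a b t) = (\<Sum>n\<le>N. a n * ca g n + b n * sb g n)"
    by (rule lin_coeff[OF g])
  also have "integral {0..2*pi} (\<lambda>t. tsum N a b t * tsum N a b t) = (\<Sum>n\<le>N. a n * ca (tsum N a b) n + b n * sb (tsum N a b) n)"
    by (rule lin_coeff[OF T])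
  also have "\<dots> = (\<Sum>n\<le>N. pi * ((a n)^2 + (b n)^2) + (if n = 0 then pi * ((a 0)^2 - (b 0)^2) else 0))"
    by (rule sum.cong) (auto simp: ca_tsum sb_tsum power2_eq_square algebra_simps)
  also have "\<dots> = pi * ((\<Sum>n\<le>N. (a n)^2 + (b n)^2) + (a 0)^2 - (b 0)^2)"
    by (simp add: sum.distrib sum_distrib_left algebra_simps)
  finally show ?thesis .
qed


lemma ca_0: "ca g 0 = integral {0..2*pi} g" by (simp add: ca_def)
lemma sb_0: "sb g 0 = 0" by (simp add: sb_def)

lemma tsum_b0: "tsum N a (b(0:=0)) = tsum N a b"
  unfolding tsum_def by (intro ext sum.cong) auto

lemma sum_lin3: "(\<Sum>n\<le>N. p * X n - 2 * Y n + Z n / p) = p * (\<Sum>n\<le>N. X n) - 2 * (\<Sum>n\<le>N. Y n) + (\<Sum>n\<le>N. Z n) / (p::real)"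
  by (simp add: sum.distrib sum_subtractf sum_distrib_left sum_divide_distrib)

lemma bessel_gap:
  assumes g: "continuous_on UNIV g" and b0: "b 0 = 0" and c0: "ca g 0 = 0"
  shows "integral {0..2*pi} (\<lambda>t. (g t)^2) - (1/pi) * (\<Sum>n\<le>N. (ca g n)^2 + (sb g n)^2)
         \<le> integral {0..2*pi} (\<lambda>t. (g t - tsum N a b t)^2)"
proof -
  have t: "((pi * a n - ca g n)^2 + (pi * b n - sb g n)^2) / pi =
        pi * ((a n)^2 + (b n)^2) - 2 * (a n * ca g n + b n * sb g n) + ((ca g n)^2 + (sb g n)^2) / pi" for n
    using pi_gt_zero by (simp add: field_simps power2_eq_square)
  have "0 \<le> (\<Sum>n\<le>N. ((pi * a n - ca g n)^2 + (pi * b n - sb g n)^2) / pi)"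
    by (intro sum_nonneg) auto
  also have "\<dots> = pi * (\<Sum>n\<le>N. (a n)^2 + (b n)^2) - 2 * (\<Sum>n\<le>N. a n * ca g n + b n * sb g n)
        + (\<Sum>n\<le>N. (ca g n)^2 + (sb g n)^2) / pi"
    unfolding t by (rule sum_lin3)
  finally have "0 \<le> \<dots>" .
  then show ?thesis
    unfolding sq_expand[OF g] b0
    apply (simp add: algebra_simps)
    using mult_nonneg_nonneg[OF pi_ge_zero zero_le_power2[of "a 0"]] by linarith
qed

lemma bessel_eq:
  assumes g: "continuous_on UNIV g" and c0: "ca g 0 = 0"
  shows "integral {0..2*pi} (\<lambda>t. (g t - tsum N (\<lambda>n. ca g n / pi) (\<lambda>n. sb g n / pi) t)^2)
     = integral {0..2*pi} (\<lambda>t. (g t)^2) - (1/pi) * (\<Sum>n\<le>N. (ca g n)^2 + (sb g n)^2)"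
proof -
  have "(\<Sum>n\<le>N. ca g n / pi * ca g n + sb g n / pi * sb g n) = (1/pi) * (\<Sum>n\<le>N. (ca g n)^2 + (sb g n)^2)"
    by (simp add: sum_distrib_left power2_eq_square algebra_simps)
  moreover have "pi * (\<Sum>n\<le>N. (ca g n / pi)^2 + (sb g n / pi)^2) = (\<Sum>n\<le>N. pi * ((ca g n / pi)^2 + (sb g n / pi)^2))"
    by (simp add: sum_distrib_left)
  moreover have "\<dots> = (\<Sum>n\<le>N. (1/pi) * ((ca g n)^2 + (sb g n)^2))"
    by (rule sum.cong) (use pi_gt_zero in \<open>simp_all add: field_simps power2_eq_square\<close>)
  moreover have "\<dots> = (1/pi) * (\<Sum>n\<le>N. (ca g n)^2 + (sb g n)^2)"
    by (simp add: sum_distrib_left)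
  ultimately show ?thesis
    unfolding sq_expand[OF g] by (simp add: c0 sb_0)
qed

lemma sq_bound: "\<bar>x\<bar> < (e::real) \<Longrightarrow> x^2 \<le> e^2"
  by (metis abs_le_square_iff abs_of_pos less_imp_le abs_ge_zero le_less_trans)

lemma parseval:
  assumes g: "continuous_on UNIV g" and per: "\<forall>t. g (t + 2*pi) = g t"
    and mz: "integral {0..2*pi} g = 0"
  shows "(\<lambda>n. (ca g n)^2 + (sb g n)^2) sums (pi * integral {0..2*pi} (\<lambda>t. (g t)^2))"
proof -
  define w where "w n = (ca g n)^2 + (sb g n)^2" for n
  define I where "I = integral {0..2*pi} (\<lambda>t. (g t)^2)"
  have c0: "ca g 0 = 0" using mz by (simp add: ca_0)
  have w0: "0 \<le> w n" for n unfolding w_def by simp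
  have sqint: "(\<lambda>t. (h t)^2) integrable_on {0..2*pi}" if "continuous_on UNIV h" for h :: "real \<Rightarrow> real"
    by (rule cint) (use that in \<open>intro continuous_intros\<close>)
  have bnd: "(\<Sum>n\<le>N. w n) \<le> pi * I" for N
  proof -
    have "0 \<le> integral {0..2*pi} (\<lambda>t. (g t - tsum N (\<lambda>n. ca g n / pi) (\<lambda>n. sb g n / pi) t)^2)"
      by (rule integral_nonneg) (auto intro!: sqint continuous_intros g tsum_cont)
    then have "0 \<le> I - (1/pi) * (\<Sum>n\<le>N. w n)"
      unfolding bessel_eq[OF g c0] I_def w_def .
    then show ?thesis using pi_gt_zero by (simp add: field_simps)
  qed
  have bnd': "(\<Sum>n<N. w n) \<le> pi * I" for N
  proof -
    have "(\<Sum>n<N. w n) \<le> (\<Sum>n\<le>N. w n)" by (rule sum_mono2) (auto simp: w0)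
    then show ?thesis using bnd[of N] by linarith
  qed
  have sm: "summable w" by (rule summableI_nonneg_bounded[OF w0 bnd'])
  have le1: "suminf w \<le> pi * I" by (rule suminf_le_const[OF sm bnd'])
  have le2: "pi * I \<le> suminf w"
  proof (rule field_le_epsilon)
    fix d :: real assume d: "0 < d"
    define e where "e = sqrt (d / (2 * pi^2))"
    have e0: "0 < e" unfolding e_def using d by simp
    have ee: "2 * pi^2 * e^2 = d" unfolding e_def using d pi_gt_zero by simp
    obtain P where P: "trigp P" "\<And>t. \<bar>g t - P t\<bar> < e"
      using trig_density[OF g per e0] by blast
    obtain N a b where Nab: "\<And>t. P t = tsum N a b t"
      using P(1) unfolding trigp_def tsum_def by blast
    have "I - (1/pi) * (\<Sum>n\<le>N. w n) \<le> integral {0..2*pi} (\<lambda>t. (g t - tsum N a (b(0:=0)) t)^2)"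
      unfolding I_def w_def by (rule bessel_gap[OF g _ c0]) simp
    also have "\<dots> \<le> integral {0..2*pi} (\<lambda>t. e^2)"
    proof (rule integral_le)
      show "(\<lambda>t. (g t - tsum N a (b(0:=0)) t)^2) integrable_on {0..2*pi}"
        by (auto intro!: sqint continuous_intros g tsum_cont)
      show "(\<lambda>t. e^2) integrable_on {0..2*pi}" by (rule cint, rule continuous_on_const)
      show "(g t - tsum N a (b(0:=0)) t)^2 \<le> e^2" for t
        using P(2)[of t] by (intro sq_bound) (simp add: tsum_b0 Nab)
    qed
    also have "\<dots> = 2 * pi * e^2" by simp
    finally have "I - (1/pi) * (\<Sum>n\<le>N. w n) \<le> 2 * pi * e^2" .
    then have "pi * I - (\<Sum>n\<le>N. w n) \<le> 2 * pi^2 * e^2"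
      using pi_gt_zero by (simp add: field_simps power2_eq_square)
    moreover have "(\<Sum>n\<le>N. w n) \<le> suminf w"
      by (rule sum_le_suminf[OF sm]) (auto simp: w0)
    ultimately show "pi * I \<le> suminf w + d" using ee by linarith
  qed
  have "suminf w = pi * I" using le1 le2 by linarith
  then show ?thesis using summable_sums[OF sm] unfolding w_def I_def by simp
qed

lemma coeff_zero_imp_zero:
  assumes g: "continuous_on UNIV g" and per: "\<forall>t. g (t + 2*pi) = g t"
    and z: "\<And>n. ca g n = 0" "\<And>n. sb g n = 0"
  shows "g t = 0"
proof -
  have mz: "integral {0..2*pi} g = 0" using z(1)[of 0] by (simp add: ca_0)
  have "(\<lambda>n. 0) sums (pi * integral {0..2*pi} (\<lambda>t. (g t)^2))"
    using parseval[OF g per mz] by (simp add: z)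
  then have "pi * integral {0..2*pi} (\<lambda>t. (g t)^2) = 0"
    using sums_unique sums_zero by metis
  then have "integral {0..2*pi} (\<lambda>t. (g t)^2) = 0" by simp
  then have "\<forall>x\<in>{0..2*pi}. (g x)^2 = 0"
    using integral_eq_0_iff[of 0 "2*pi" "\<lambda>t. (g t)^2"] g
    by (auto intro!: continuous_intros intro: continuous_on_subset)
  moreover obtain s where "s \<in> {0..2*pi}" "g t = g s" using periodic_reduce[OF per] by blast
  ultimately show ?thesis by simp
qed




lemma coeff_deriv:
  assumes d: "\<And>t. (g has_real_derivative g' t) (at t)" and c': "continuous_on UNIV g'"
    and per: "\<forall>t. g (t + 2*pi) = g t"
  shows "ca g' n = real n * sb g n" "sb g' n = - real n * ca g n"
proof -
  have gc: "continuous_on UNIV g"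
    by (rule continuous_at_imp_continuous_on) (use d DERIV_isCont in blast)
  have g2: "g (2*pi) = g 0" using per[rule_format, of 0] by simp
  have c2: "cos (real n * (2*pi)) = 1"
    using cos_2npi[of n] by (simp add: mult.commute mult.left_commute)
  have s2: "sin (real n * (2*pi)) = 0"
    using sin_2npi[of n] by (simp add: mult.commute mult.left_commute)
  have dc: "((\<lambda>t. cos (real n * t)) has_real_derivative (- sin (real n * x) * real n)) (at x)" for x
    by (auto intro!: derivative_eq_intros)
  have ds: "((\<lambda>t. sin (real n * t)) has_real_derivative (cos (real n * x) * real n)) (at x)" for x
    by (auto intro!: derivative_eq_intros)
  have F1: "((\<lambda>x. g' x * cos (real n * x) + (- sin (real n * x) * real n) * g x) has_integral
        (g (2*pi) * cos (real n * (2*pi)) - g 0 * cos (real n * 0))) {0..2*pi}"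
  proof (rule fundamental_theorem_of_calculus)
    fix x :: real
    have "((\<lambda>t. g t * cos (real n * t)) has_real_derivative
        (g' x * cos (real n * x) + (- sin (real n * x) * real n) * g x)) (at x)"
      by (rule DERIV_mult[OF d dc])
    then show "((\<lambda>t. g t * cos (real n * t)) has_vector_derivative
        (g' x * cos (real n * x) + (- sin (real n * x) * real n) * g x)) (at x within {0..2*pi})"
      unfolding has_real_derivative_iff_has_vector_derivative by (rule has_vector_derivative_at_within)
  qed simp
  have e1: "(\<lambda>x. g' x * cos (real n * x) + (- sin (real n * x) * real n) * g x) =
            (\<lambda>x. g' x * cos (real n * x) + (- real n) * (g x * sin (real n * x)))"
    by (rule ext) (simp add: algebra_simps)
  have "integral {0..2*pi} (\<lambda>x. g' x * cos (real n * x) + (- real n) * (g x * sin (real n * x))) = 0"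
    using integral_unique[OF F1] g2 c2 unfolding e1 by simp
  moreover have "integral {0..2*pi} (\<lambda>x. g' x * cos (real n * x) + (- real n) * (g x * sin (real n * x)))
      = ca g' n + (- real n) * sb g n"
    unfolding ca_def sb_def
    by (subst integral_add) (auto intro!: cint continuous_intros c' gc simp: int_cmul)
  ultimately show "ca g' n = real n * sb g n" by simp
  have F2: "((\<lambda>x. g' x * sin (real n * x) + (cos (real n * x) * real n) * g x) has_integral
        (g (2*pi) * sin (real n * (2*pi)) - g 0 * sin (real n * 0))) {0..2*pi}"
  proof (rule fundamental_theorem_of_calculus)
    fix x :: real
    have "((\<lambda>t. g t * sin (real n * t)) has_real_derivative
        (g' x * sin (real n * x) + (cos (real n * x) * real n) * g x)) (at x)"
      by (rule DERIV_mult[OF d ds])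
    then show "((\<lambda>t. g t * sin (real n * t)) has_vector_derivative
        (g' x * sin (real n * x) + (cos (real n * x) * real n) * g x)) (at x within {0..2*pi})"
      unfolding has_real_derivative_iff_has_vector_derivative by (rule has_vector_derivative_at_within)
  qed simp
  have e2: "(\<lambda>x. g' x * sin (real n * x) + (cos (real n * x) * real n) * g x) =
            (\<lambda>x. g' x * sin (real n * x) + real n * (g x * cos (real n * x)))"
    by (rule ext) (simp add: algebra_simps)
  have "integral {0..2*pi} (\<lambda>x. g' x * sin (real n * x) + real n * (g x * cos (real n * x))) = 0"
    using integral_unique[OF F2] s2 unfolding e2 by simp
  moreover have "integral {0..2*pi} (\<lambda>x. g' x * sin (real n * x) + real n * (g x * cos (real n * x)))
      = sb g' n + real n * ca g n"
    unfolding ca_def sb_def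
    by (subst integral_add) (auto intro!: cint continuous_intros c' gc simp: int_cmul)
  ultimately show "sb g' n = - real n * ca g n" by simp
qed

lemma ca_add: "continuous_on UNIV u \<Longrightarrow> continuous_on UNIV v \<Longrightarrow> ca (\<lambda>t. u t + v t) n = ca u n + ca v n"
  unfolding ca_def distrib_right
  by (subst integral_add) (auto intro!: cint continuous_intros)
lemma sb_add: "continuous_on UNIV u \<Longrightarrow> continuous_on UNIV v \<Longrightarrow> sb (\<lambda>t. u t + v t) n = sb u n + sb v n"
  unfolding sb_def distrib_right
  by (subst integral_add) (auto intro!: cint continuous_intros)
lemma ca_diff: "continuous_on UNIV u \<Longrightarrow> continuous_on UNIV v \<Longrightarrow> ca (\<lambda>t. u t - v t) n = ca u n - ca v n"
  unfolding ca_def left_diff_distrib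
  by (subst integral_diff) (auto intro!: cint continuous_intros)
lemma sb_diff: "continuous_on UNIV u \<Longrightarrow> continuous_on UNIV v \<Longrightarrow> sb (\<lambda>t. u t - v t) n = sb u n - sb v n"
  unfolding sb_def left_diff_distrib
  by (subst integral_diff) (auto intro!: cint continuous_intros)

lemma tsum_periodic: "tsum N a b (t + 2*pi) = tsum N a b t"
proof -
  have pc: "\<forall>t. cos (t + 2*pi) = cos t" and ps: "\<forall>t. sin (t + 2*pi) = sin t" by simp_all
  have e: "real n * (t + 2*pi) = real n * t + 2*pi*real n" for n by (simp add: algebra_simps)
  have c: "cos (real n * (t + 2*pi)) = cos (real n * t)" for n
    unfolding e by (rule periodic_nat[OF pc])
  have s: "sin (real n * (t + 2*pi)) = sin (real n * t)" for n
    unfolding e by (rule periodic_nat[OF ps])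
  show ?thesis unfolding tsum_def c s ..
qed

lemma poly_sum_upto: fixes p :: "real poly" assumes "degree p \<le> M" shows "poly p x = (\<Sum>k=0..M. coeff p k * x^k)"
proof -
  have "poly p x = (\<Sum>k\<le>degree p. coeff p k * x^k)" by (rule poly_altdef)
  also have "\<dots> = (\<Sum>k\<le>M. coeff p k * x^k)"
    by (rule sum.mono_neutral_left) (use assms in \<open>auto simp: coeff_eq_0\<close>)
  also have "\<dots> = (\<Sum>k=0..M. coeff p k * x^k)" by (simp add: atMost_atLeast0)
  finally show ?thesis .
qed

lemma P_prod: "m \<ge> 1 \<Longrightarrow> P_poly m = (\<Prod>j\<in>{2..m}. [: - ((real j)^2), 1 :])"
  unfolding P_poly_def by auto

lemma Q_eq: assumes "m \<ge> 1" shows "Q_poly m = [:-1, 1:] * P_poly m"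
proof -
  have "{1..m} = insert 1 {2..m}" using assms by auto
  then show ?thesis unfolding Q_poly_def P_prod[OF assms] by simp
qed

lemma deg_Q: "degree (Q_poly m) \<le> m"
proof -
  have "degree (Q_poly m) \<le> sum (degree \<circ> (\<lambda>j. [: - ((real j)^2), 1 :])) {1..m}"
    unfolding Q_poly_def by (rule degree_prod_sum_le) simp
  then show ?thesis by simp
qed

lemma deg_P: assumes "m \<ge> 1" shows "degree (P_poly m) \<le> m - 1"
proof -
  have "degree (P_poly m) \<le> sum (degree \<circ> (\<lambda>j. [: - ((real j)^2), 1 :])) {2..m}"
    unfolding P_prod[OF assms] by (rule degree_prod_sum_le) simp
  then show ?thesis by simp
qed

lemma S_mult: "S_poly m * [:-1, 1:] = P_poly m - [:poly (P_poly m) 1:]"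
proof -
  have "poly (P_poly m - [:poly (P_poly m) 1:]) 1 = 0" by simp
  then have "[:-1, 1:] dvd (P_poly m - [:poly (P_poly m) 1:])"
    using poly_eq_0_iff_dvd[of "P_poly m - [:poly (P_poly m) 1:]" 1] by simp
  then show ?thesis unfolding S_poly_def by (rule dvd_div_mult_self)
qed

lemma deg_S: assumes "m \<ge> 2" shows "degree (S_poly m) \<le> m - 2"
proof (cases "S_poly m = 0")
  case True then show ?thesis by simp
next
  case False
  have "degree (S_poly m * [:-1, 1:]) = degree (S_poly m) + 1"
    using False by (subst degree_mult_eq) auto
  moreover have "degree (P_poly m - [:poly (P_poly m) 1:]) \<le> m - 1"
    using degree_diff_le_max[of "P_poly m" "[:poly (P_poly m) 1:]"] deg_P[of m] assms by auto
  ultimately show ?thesis using S_mult[of m] assms by simp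
qed

lemma poly_S: "poly (S_poly m) x * (x - 1) = poly (P_poly m) x - poly (P_poly m) 1"
proof -
  have "poly (S_poly m * [:-1, 1:]) x = poly (P_poly m - [:poly (P_poly m) 1:]) x"
    by (simp only: S_mult)
  then show ?thesis by (simp add: algebra_simps)
qed

lemma poly_Q_zero: "1 \<le> n \<Longrightarrow> n \<le> m \<Longrightarrow> poly (Q_poly m) ((real n)^2) = 0"
  unfolding Q_poly_def poly_prod by (intro prod_zero) (auto intro!: bexI[of _ n])

lemma poly_Q_pos: "n > m \<Longrightarrow> 0 < poly (Q_poly m) ((real n)^2)"
  unfolding Q_poly_def poly_prod
proof -
  assume "n > m"
  then have "j \<in> {1..m} \<Longrightarrow> (real j)^2 < (real n)^2" for j
    by (auto intro!: power_strict_mono)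
  then show "0 < (\<Prod>j\<in>{1..m}. poly [:- (real j)\<^sup>2, 1:] ((real n)\<^sup>2))"
    by (intro prod_pos) auto
qed

lemma poly_Q_nonneg: "n \<ge> 1 \<Longrightarrow> 0 \<le> poly (Q_poly m) ((real n)^2)"
  using poly_Q_zero[of n m] poly_Q_pos[of m n] by (cases "n \<le> m") auto




lemma sum_split0: "(\<Sum>n\<le>(m::nat). F n) = F 0 + (\<Sum>n=1..m. (F n :: real))"
proof -
  have "{..m} = insert 0 {1..m}" by auto
  then show ?thesis by simp
qed

lemma E_iff:
  assumes fc: "continuous_on UNIV f" and per: "\<forall>t. f (t + 2*pi) = f t"
    and mz: "integral {0..2*pi} f = 0"
  shows "(\<exists>\<alpha> \<beta> :: nat \<Rightarrow> real. \<forall>t. f t = (\<Sum>n=1..m. \<alpha> n * cos (real n * t) + \<beta> n * sin (real n * t)))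
     \<longleftrightarrow> (\<forall>n>m. (ca f n)^2 + (sb f n)^2 = 0)"
proof
  assume "\<exists>\<alpha> \<beta> :: nat \<Rightarrow> real. \<forall>t. f t = (\<Sum>n=1..m. \<alpha> n * cos (real n * t) + \<beta> n * sin (real n * t))"
  then obtain \<alpha> \<beta> :: "nat \<Rightarrow> real" where ab: "\<And>t. f t = (\<Sum>n=1..m. \<alpha> n * cos (real n * t) + \<beta> n * sin (real n * t))"
    by blast
  define a where "a n = (if n = 0 then 0 else \<alpha> n)" for n
  define b where "b n = (if n = 0 then 0 else \<beta> n)" for n
  have "f t = tsum m a b t" for t
  proof -
    have "tsum m a b t = (\<Sum>n=1..m. a n * cos (real n * t) + b n * sin (real n * t))"
      unfolding tsum_def sum_split0 by (simp add: a_def b_def)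
    also have "\<dots> = f t" unfolding ab by (rule sum.cong) (auto simp: a_def b_def)
    finally show ?thesis by simp
  qed
  then have fe: "f = tsum m a b" by auto
  show "\<forall>n>m. (ca f n)^2 + (sb f n)^2 = 0"
    unfolding fe ca_tsum sb_tsum by auto
next
  assume W: "\<forall>n>m. (ca f n)^2 + (sb f n)^2 = 0"
  define T where "T = tsum m (\<lambda>n. ca f n / pi) (\<lambda>n. sb f n / pi)"
  have Tc: "continuous_on UNIV T" unfolding T_def by (rule tsum_cont)
  have c0: "ca f 0 = 0" using mz by (simp add: ca_0)
  have cz: "ca f n = 0" "sb f n = 0" if "n > m" for n
    using W that by (auto simp: add_nonneg_eq_0_iff)
  have g0: "f t - T t = 0" for t
  proof (rule coeff_zero_imp_zero[where g = "\<lambda>t. f t - T t"])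
    show "continuous_on UNIV (\<lambda>t. f t - T t)" by (intro continuous_intros fc Tc)
    show "\<forall>t. f (t + 2*pi) - T (t + 2*pi) = f t - T t"
      using per by (simp add: T_def tsum_periodic)
    show "ca (\<lambda>t. f t - T t) n = 0" for n
      unfolding ca_diff[OF fc Tc] unfolding T_def ca_tsum
      using cz[of n] c0 by auto
    show "sb (\<lambda>t. f t - T t) n = 0" for n
      unfolding sb_diff[OF fc Tc] unfolding T_def sb_tsum
      using cz[of n] by (auto simp: sb_0)
  qed
  have "f t = (\<Sum>n=1..m. ca f n / pi * cos (real n * t) + sb f n / pi * sin (real n * t))" for t
  proof -
    have "f t = T t" using g0[of t] by simp
    also have "\<dots> = (\<Sum>n=1..m. ca f n / pi * cos (real n * t) + sb f n / pi * sin (real n * t))"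
      unfolding T_def tsum_def sum_split0 by (simp add: c0 sb_0)
    finally show ?thesis .
  qed
  then show "\<exists>\<alpha> \<beta> :: nat \<Rightarrow> real. \<forall>t. f t = (\<Sum>n=1..m. \<alpha> n * cos (real n * t) + \<beta> n * sin (real n * t))"
    by (rule_tac x="\<lambda>n. ca f n / pi" in exI, rule_tac x="\<lambda>n. sb f n / pi" in exI) simp
qed




theorem proposition2p1:
  fixes m :: nat and f :: "real \<Rightarrow> real"
  assumes m_pos: "m \<ge> 1"
    and smooth: "C_m m f"
    and periodic: "\<forall>t. f (t + 2 * pi) = f t"
    and mean_zero: "integral {0..2 * pi} f = 0"
  defines "A \<equiv> (\<Sum>k=0..m. coeff (Q_poly m) k *
                   integral {0..2 * pi} (\<lambda>t. ((deriv ^^ k) f t)^2))"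
    and "B \<equiv> (\<Sum>k=0..m-1. coeff (P_poly m) k *
                   integral {0..2 * pi} (\<lambda>t. ((deriv ^^ Suc k) f t)^2 - ((deriv ^^ k) f t)^2))"
    and "C \<equiv> (\<Prod>j=2..m. 1 - (real j)^2) *
                 integral {0..2 * pi} (\<lambda>t. (deriv f t)^2 - (f t)^2)
             + (\<Sum>k=1..m-1. coeff (S_poly m) (k - 1) *
                 integral {0..2 * pi} (\<lambda>t. ((deriv ^^ Suc k) f t + (deriv ^^ (k - 1)) f t)^2))"
    and "E \<equiv> (\<exists>\<alpha> \<beta> :: nat \<Rightarrow> real. \<forall>t.
                 f t = (\<Sum>n=1..m. \<alpha> n * cos (real n * t) + \<beta> n * sin (real n * t)))"
  shows "0 \<le> A \<and> 0 \<le> B \<and> (m \<ge> 2 \<longrightarrow> 0 \<le> C)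
         \<and> (A = 0 \<longleftrightarrow> E) \<and> (B = 0 \<longleftrightarrow> E) \<and> (m \<ge> 2 \<longrightarrow> (C = 0 \<longleftrightarrow> E))"
proof -
  define D where "D k = (deriv ^^ k) f" for k
  have hd: "(D k has_real_derivative D (Suc k) x) (at x)" if "k < m" for k x
    using smooth that unfolding C_m_def D_def by auto
  have hc: "continuous_on UNIV (D k)" if "k \<le> m" for k
    using smooth that unfolding C_m_def D_def by auto
  have D0: "D 0 = f" by (simp add: D_def)
  have D1: "D 1 = deriv f" by (simp add: D_def)
  have fc: "continuous_on UNIV f" using hc[of 0] by (simp add: D0)
  have per: "\<forall>t. D k (t + 2*pi) = D k t" if "k \<le> m" for k
    using that
  proof (induction k)
    case 0 then show ?case using periodic by (simp add: D0)
  next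
    case (Suc k)
    then have km: "k < m" and IH: "\<forall>t. D k (t + 2*pi) = D k t" by auto
    show ?case
    proof
      fix t
      have "((\<lambda>s. D k (s + 2*pi)) has_real_derivative D (Suc k) (t + 2*pi)) (at t)"
        using DERIV_shift[of "D k" "D (Suc k) (t + 2*pi)" t "2*pi"] hd[OF km, of "t + 2*pi"] by simp
      moreover have "(\<lambda>s. D k (s + 2*pi)) = D k" using IH by auto
      ultimately have "(D k has_real_derivative D (Suc k) (t + 2*pi)) (at t)" by simp
      then show "D (Suc k) (t + 2*pi) = D (Suc k) t" using hd[OF km, of t] DERIV_unique by blast
    qed
  qed
  have cstep: "ca (D (Suc k)) n = real n * sb (D k) n \<and> sb (D (Suc k)) n = - real n * ca (D k) n"
    if "k < m" for k n
    using coeff_deriv[OF hd[OF that] hc[of "Suc k"] per[of k]] that by auto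
  define W where "W n = (ca f n)^2 + (sb f n)^2" for n
  have wk: "(ca (D k) n)^2 + (sb (D k) n)^2 = real n ^ (2*k) * W n" if "k \<le> m" for k n
    using that
  proof (induction k)
    case 0 then show ?case by (simp add: D0 W_def)
  next
    case (Suc k)
    then have km: "k < m" by simp
    have "(ca (D (Suc k)) n)^2 + (sb (D (Suc k)) n)^2 = (real n)^2 * ((ca (D k) n)^2 + (sb (D k) n)^2)"
      using cstep[OF km, of n] by (simp add: power2_eq_square algebra_simps)
    also have "\<dots> = (real n)^2 * (real n ^ (2*k) * W n)" using Suc km by simp
    also have "\<dots> = real n ^ (2 * Suc k) * W n" by (simp only: mult_Suc_right power_add mult.assoc)
    finally show ?case .
  qed
  have mz: "integral {0..2*pi} (D k) = 0" if "k \<le> m" for k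
  proof (cases k)
    case 0 then show ?thesis using mean_zero by (simp add: D0)
  next
    case (Suc j)
    then have "ca (D k) 0 = 0" using cstep[of j 0] that by simp
    then show ?thesis by (simp add: ca_0)
  qed
  define I where "I k = integral {0..2*pi} (\<lambda>t. (D k t)^2)" for k
  have par: "(\<lambda>n. real n ^ (2*k) * W n) sums (pi * I k)" if "k \<le> m" for k
    using parseval[OF hc[OF that] per[OF that] mz[OF that]] wk[OF that] unfolding I_def by simp
  have W0: "W 0 = 0" using mean_zero by (simp add: W_def ca_0 sb_0)
  have Wnn: "0 \<le> W n" for n by (simp add: W_def)
  have Iint: "(\<lambda>t. (D k t)^2) integrable_on {0..2*pi}" if "k \<le> m" for k
    by (rule cint) (intro continuous_intros hc that)
  define T where "T n = poly (Q_poly m) ((real n)^2) * W n" for n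
  have pw: "real n ^ (2*k) = ((real n)^2)^k" for n k by (simp add: power_mult)
  have sA: "T sums (pi * A)"
  proof -
    have "(\<lambda>n. \<Sum>k=0..m. coeff (Q_poly m) k * (real n ^ (2*k) * W n)) sums
          (\<Sum>k=0..m. coeff (Q_poly m) k * (pi * I k))"
      by (intro sums_sum sums_mult par) auto
    moreover have "(\<Sum>k=0..m. coeff (Q_poly m) k * (real n ^ (2*k) * W n)) = T n" for n
      unfolding T_def poly_sum_upto[OF deg_Q] sum_distrib_right pw
      by (rule sum.cong) (simp_all add: algebra_simps)
    moreover have "(\<Sum>k=0..m. coeff (Q_poly m) k * (pi * I k)) = pi * A"
      unfolding A_def I_def D_def sum_distrib_left by (rule sum.cong) (simp_all add: algebra_simps)
    ultimately show ?thesis by simp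
  qed
  have sB: "T sums (pi * B)"
  proof -
    have "(\<lambda>n. \<Sum>k=0..m-1. coeff (P_poly m) k * (real n ^ (2*Suc k) * W n - real n ^ (2*k) * W n)) sums
          (\<Sum>k=0..m-1. coeff (P_poly m) k * (pi * I (Suc k) - pi * I k))"
      using m_pos by (intro sums_sum sums_mult sums_diff par) auto
    moreover have "(\<Sum>k=0..m-1. coeff (P_poly m) k * (real n ^ (2*Suc k) * W n - real n ^ (2*k) * W n)) = T n" for n
    proof -
      define x where "x = (real n)^2"
      have "(\<Sum>k=0..m-1. coeff (P_poly m) k * (real n ^ (2*Suc k) * W n - real n ^ (2*k) * W n))
          = (x - 1) * W n * (\<Sum>k=0..m-1. coeff (P_poly m) k * x^k)"
        unfolding sum_distrib_left pw x_def by (rule sum.cong) (simp_all add: algebra_simps)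
      also have "\<dots> = (x - 1) * W n * poly (P_poly m) x"
        by (simp add: poly_sum_upto[OF deg_P[OF m_pos]])
      also have "\<dots> = T n"
        unfolding T_def Q_eq[OF m_pos] x_def by (simp add: algebra_simps)
      finally show ?thesis .
    qed
    moreover have "(\<Sum>k=0..m-1. coeff (P_poly m) k * (pi * I (Suc k) - pi * I k)) = pi * B"
    proof -
      have ik: "integral {0..2 * pi} (\<lambda>t. ((deriv ^^ Suc k) f t)^2 - ((deriv ^^ k) f t)^2) = I (Suc k) - I k"
        if "k \<in> {0..m-1}" for k
        unfolding I_def D_def[symmetric] using that m_pos
        by (intro integral_diff Iint) auto
      show ?thesis
        unfolding B_def sum_distrib_left
      proof (intro sum.cong refl)
        fix k assume k: "k \<in> {0..m-1}"
        show "coeff (P_poly m) k * (pi * I (Suc k) - pi * I k) =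
          pi * (coeff (P_poly m) k * integral {0..2 * pi} (\<lambda>t. ((deriv ^^ Suc k) f t)^2 - ((deriv ^^ k) f t)^2))"
          unfolding ik[OF k] by (simp add: algebra_simps)
      qed
    qed
    ultimately show ?thesis by simp
  qed
  have sC: "T sums (pi * C)" if m2: "m \<ge> 2"
  proof -
    define H where "H j = (\<lambda>t. D (Suc (Suc j)) t + D j t)" for j
    define p1 where "p1 = poly (P_poly m) 1"
    have p1e: "p1 = (\<Prod>j=2..m. 1 - (real j)^2)"
      unfolding p1_def P_prod[OF m_pos] poly_prod by simp
    have parH: "(\<lambda>n. (1 - (real n)^2)^2 * (real n ^ (2*j) * W n)) sums
        (pi * integral {0..2*pi} (\<lambda>t. (H j t)^2))" if j: "j \<le> m - 2" for j
    proof -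
      have j2: "Suc (Suc j) \<le> m" "Suc j < m" "j < m" using j m2 by auto
      have hj: "continuous_on UNIV (D j)" using hc j2 by simp
      have Hc: "continuous_on UNIV (H j)" unfolding H_def by (intro continuous_intros hc j2(1)) (use j2 in auto)
      have cH: "ca (H j) n = (1 - (real n)^2) * ca (D j) n" "sb (H j) n = (1 - (real n)^2) * sb (D j) n" for n
        unfolding H_def ca_add[OF hc[OF j2(1)] hj] sb_add[OF hc[OF j2(1)] hj]
        using cstep[OF j2(2), of n] cstep[OF j2(3), of n] j2
        by (auto simp: power2_eq_square algebra_simps)
      have Hp: "\<forall>t. H j (t + 2*pi) = H j t" unfolding H_def using per[OF j2(1)] per[of j] j2 by auto
      have Hm: "integral {0..2*pi} (H j) = 0"
        using cH(1)[of 0] mz[of j] j2 by (simp add: ca_0)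
      have "(\<lambda>n. (ca (H j) n)^2 + (sb (H j) n)^2) sums (pi * integral {0..2*pi} (\<lambda>t. (H j t)^2))"
        by (rule parseval[OF Hc Hp Hm])
      moreover have "(ca (H j) n)^2 + (sb (H j) n)^2 = (1 - (real n)^2)^2 * (real n ^ (2*j) * W n)" for n
      proof -
        have "(ca (H j) n)^2 + (sb (H j) n)^2 = (1 - (real n)^2)^2 * ((ca (D j) n)^2 + (sb (D j) n)^2)"
          unfolding cH by (simp only: power_mult_distrib distrib_left)
        then show ?thesis using wk[of j n] j2 by simp
      qed
      ultimately show ?thesis by simp
    qed
    have "(\<lambda>n. p1 * (real n ^ (2*1) * W n - real n ^ (2*0) * W n)
         + (\<Sum>j=0..m-2. coeff (S_poly m) j * ((1 - (real n)^2)^2 * (real n ^ (2*j) * W n)))) sums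
         (p1 * (pi * I 1 - pi * I 0) + (\<Sum>j=0..m-2. coeff (S_poly m) j * (pi * integral {0..2*pi} (\<lambda>t. (H j t)^2))))"
      using m_pos by (intro sums_add sums_mult sums_diff sums_sum par parH) auto
    moreover have "p1 * (real n ^ (2*1) * W n - real n ^ (2*0) * W n)
         + (\<Sum>j=0..m-2. coeff (S_poly m) j * ((1 - (real n)^2)^2 * (real n ^ (2*j) * W n))) = T n" for n
    proof -
      define x where "x = (real n)^2"
      have "(\<Sum>j=0..m-2. coeff (S_poly m) j * ((1 - (real n)^2)^2 * (real n ^ (2*j) * W n)))
          = (x - 1)^2 * W n * (\<Sum>j=0..m-2. coeff (S_poly m) j * x^j)"
        unfolding sum_distrib_left pw x_def by (rule sum.cong) (simp_all add: algebra_simps power2_eq_square)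
      also have "\<dots> = (x - 1) * W n * (poly (S_poly m) x * (x - 1))"
        by (simp add: poly_sum_upto[OF deg_S[OF m2]] power2_eq_square)
      also have "\<dots> = (x - 1) * W n * (poly (P_poly m) x - p1)"
        unfolding poly_S p1_def ..
      finally have e: "(\<Sum>j=0..m-2. coeff (S_poly m) j * ((1 - (real n)^2)^2 * (real n ^ (2*j) * W n)))
          = (x - 1) * W n * (poly (P_poly m) x - p1)" .
      show ?thesis
        unfolding e T_def Q_eq[OF m_pos] by (simp add: x_def algebra_simps power2_eq_square)
    qed
    moreover have "p1 * (pi * I 1 - pi * I 0) + (\<Sum>j=0..m-2. coeff (S_poly m) j * (pi * integral {0..2*pi} (\<lambda>t. (H j t)^2)))
       = pi * C"
    proof -
      have i1: "integral {0..2 * pi} (\<lambda>t. (deriv f t)^2 - (f t)^2) = I 1 - I 0"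
      proof -
        have "integral {0..2 * pi} (\<lambda>t. (deriv f t)^2 - (f t)^2) = integral {0..2 * pi} (\<lambda>t. (D 1 t)^2 - (D 0 t)^2)"
          by (simp add: D_def)
        also have "\<dots> = I 1 - I 0"
          unfolding I_def using m_pos by (intro integral_diff Iint) auto
        finally show ?thesis .
      qed
      have "(\<Sum>k=1..m-1. coeff (S_poly m) (k - 1) *
                 integral {0..2 * pi} (\<lambda>t. ((deriv ^^ Suc k) f t + (deriv ^^ (k - 1)) f t)^2))
          = (\<Sum>j=0..m-2. coeff (S_poly m) j * integral {0..2*pi} (\<lambda>t. (H j t)^2))"
      proof -
        define F where "F k = coeff (S_poly m) (k - 1) *
                 integral {0..2 * pi} (\<lambda>t. ((deriv ^^ Suc k) f t + (deriv ^^ (k - 1)) f t)^2)" for k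
        have se: "{1..m-1} = {Suc 0..Suc (m-2)}" using m2 by auto
        have "(\<Sum>k=1..m-1. coeff (S_poly m) (k - 1) *
                 integral {0..2 * pi} (\<lambda>t. ((deriv ^^ Suc k) f t + (deriv ^^ (k - 1)) f t)^2))
             = sum F {1..m-1}" unfolding F_def ..
        also have "\<dots> = sum F {Suc 0..Suc (m-2)}" unfolding se ..
        also have "\<dots> = (\<Sum>j=0..m-2. F (Suc j))" by (rule sum.shift_bounds_cl_Suc_ivl)
        also have "\<dots> = (\<Sum>j=0..m-2. coeff (S_poly m) j * integral {0..2*pi} (\<lambda>t. (H j t)^2))"
          by (rule sum.cong) (simp_all add: F_def H_def D_def)
        finally show ?thesis .
      qed
      then show ?thesis
        unfolding C_def i1 p1e[symmetric] by (simp add: sum_distrib_left algebra_simps)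
    qed
    ultimately show ?thesis by simp
  qed
  have Tnn: "0 \<le> T n" for n
  proof (cases "n = 0")
    case True then show ?thesis by (simp add: T_def W0)
  next
    case False then show ?thesis
      unfolding T_def using poly_Q_nonneg[of n m] Wnn[of n] by simp
  qed
  have smT: "summable T" using sA sums_summable by blast
  have AT: "pi * A = suminf T" using sA sums_unique by blast
  have BA: "B = A" using sA sB sums_unique2 by fastforce
  have CA: "C = A" if "m \<ge> 2" using sA sC[OF that] sums_unique2 by fastforce
  have "0 \<le> pi * A" using suminf_nonneg[OF smT Tnn] AT by simp
  then have A0: "0 \<le> A" using pi_gt_zero by (simp add: zero_le_mult_iff)
  have "A = 0 \<longleftrightarrow> suminf T = 0" by (simp add: AT[symmetric])
  also have "\<dots> \<longleftrightarrow> (\<forall>n. T n = 0)" by (rule suminf_eq_zero_iff[OF smT Tnn])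
  also have "\<dots> \<longleftrightarrow> (\<forall>n>m. W n = 0)"
  proof
    assume h: "\<forall>n. T n = 0"
    show "\<forall>n>m. W n = 0"
    proof (intro allI impI)
      fix n assume n: "n > m"
      show "W n = 0" using poly_Q_pos[OF n] h[rule_format, of n] unfolding T_def by simp
    qed
  next
    assume h: "\<forall>n>m. W n = 0"
    show "\<forall>n. T n = 0"
    proof
      fix n
      show "T n = 0"
      proof (cases "n = 0")
        case True then show ?thesis by (simp add: T_def W0)
      next
        case False
        show ?thesis
        proof (cases "n \<le> m")
          case True then show ?thesis using False poly_Q_zero[of n m] unfolding T_def by simp
        next
          case False then show ?thesis using h unfolding T_def by simp
        qed
      qed
    qed
  qed
  also have "\<dots> \<longleftrightarrow> E"
    unfolding E_def W_def using E_iff[OF fc periodic mean_zero, of m] by simp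
  finally have AE: "A = 0 \<longleftrightarrow> E" .
  show ?thesis by (intro conjI impI) (simp_all add: A0 AE BA CA)
qed


end
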